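(* The sequence $(m_n)_{n\ge0}$ is infinitely divisible: for every $\alpha>0$, $(m_n^\alpha)_{n\ge0}$ is a Hausdorff moment sequence.
   Context: $(m_n)_{n\ge0}$ is the unique sequence of positive reals with $m_0=1$ and $(1+m_1+\cdots+m_n)m_n=1$ for $n\ge1$. A Hausdorff moment sequence is a sequence of the form $\big(\int_0^1t^n\,d\tau(t)\big)_{n\ge0}$ for a positive measure $\tau$ on $[0,1]$. *)

theory Defs
  imports "HOL-Probability.Probability"
begin

definition is_m_seq :: "(nat \<Rightarrow> real) \<Rightarrow> bool" where
  "is_m_seq m \<longleftrightarrow> m 0 = 1 \<and> (\<forall>n. m n > 0) \<and>
     (\<forall>n\<ge>1. (1 + (\<Sum>k=1..n. m k)) * m n = 1)"

definition m_seq :: "nat \<Rightarrow> real" where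
  "m_seq = (THE m. is_m_seq m)"

definition hausdorff_moment_seq :: "(nat \<Rightarrow> real) \<Rightarrow> bool" where
  "hausdorff_moment_seq c \<longleftrightarrow>
     (\<exists>\<tau> :: real measure.
        sets \<tau> = sets (restrict_space borel {0..1}) \<and> finite_measure \<tau> \<and>
        (\<forall>n. integrable \<tau> (\<lambda>t. t ^ n) \<and> c n = (\<integral>t. t ^ n \<partial>\<tau>)))"

end

theory Submission
  imports Defs
begin


definition Lfin :: "(nat \<Rightarrow> real) \<Rightarrow> bool" where
  "Lfin c \<longleftrightarrow> (\<exists>xs. (\<forall>p\<in>set xs. 0 \<le> fst p \<and> fst p \<le> 1 \<and> 0 \<le> snd p) \<and>
      c = (\<lambda>n. sum_list (map (\<lambda>p. snd p * fst p ^ n) xs)))"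

lemma Lfin_pow: "0 \<le> x \<Longrightarrow> x \<le> 1 \<Longrightarrow> Lfin (\<lambda>n. x ^ n)"
  unfolding Lfin_def by (rule exI[of _ "[(x,1)]"]) auto

lemma Lfin_zero: "Lfin (\<lambda>n. 0)"
  unfolding Lfin_def by (rule exI[of _ "[]"]) auto

lemma Lfin_scale: assumes "Lfin c" "0 \<le> t" shows "Lfin (\<lambda>n. t * c n)"
proof -
  obtain xs where xs: "\<forall>p\<in>set xs. 0 \<le> fst p \<and> fst p \<le> 1 \<and> 0 \<le> snd p"
     "c = (\<lambda>n. sum_list (map (\<lambda>p. snd p * fst p ^ n) xs))" using assms unfolding Lfin_def by blast
  show ?thesis unfolding Lfin_def
    apply (rule exI[of _ "map (\<lambda>p. (fst p, t * snd p)) xs"])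
    using xs assms by (auto simp: o_def sum_list_const_mult mult.assoc)
qed

lemma Lfin_add: assumes "Lfin a" "Lfin b" shows "Lfin (\<lambda>n. a n + b n)"
proof -
  obtain xs where xs: "\<forall>p\<in>set xs. 0 \<le> fst p \<and> fst p \<le> 1 \<and> 0 \<le> snd p"
     "a = (\<lambda>n. sum_list (map (\<lambda>p. snd p * fst p ^ n) xs))" using assms unfolding Lfin_def by blast
  obtain ys where ys: "\<forall>p\<in>set ys. 0 \<le> fst p \<and> fst p \<le> 1 \<and> 0 \<le> snd p"
     "b = (\<lambda>n. sum_list (map (\<lambda>p. snd p * fst p ^ n) ys))" using assms unfolding Lfin_def by blast
  show ?thesis unfolding Lfin_def
    apply (rule exI[of _ "xs @ ys"])
    using xs ys by auto
qed

lemma sum_list_prod_aux: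
  fixes xs ys :: "(real \<times> real) list"
  shows
  "sum_list (map (\<lambda>p. snd p * fst p ^ n)
     (concat (map (\<lambda>p. map (\<lambda>q. (fst p * fst q, snd p * snd q)) ys) xs))) =
   sum_list (map (\<lambda>p. snd p * fst p ^ n) xs) * sum_list (map (\<lambda>p. snd p * fst p ^ n) ys)"
proof (induction xs)
  case Nil show ?case by simp
next
  case (Cons x xs)
  have "sum_list (map (\<lambda>q. snd x * snd q * (fst x * fst q) ^ n) ys)
       = (snd x * fst x ^ n) * sum_list (map (\<lambda>p. snd p * fst p ^ n) ys)"
    by (simp add: sum_list_const_mult[symmetric] power_mult_distrib mult_ac)
  then show ?case using Cons by (simp add: o_def algebra_simps)
qed

lemma Lfin_mult: assumes "Lfin a" "Lfin b" shows "Lfin (\<lambda>n. a n * b n)"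
proof -
  obtain xs where xs: "\<forall>p\<in>set xs. 0 \<le> fst p \<and> fst p \<le> 1 \<and> 0 \<le> snd p"
     "a = (\<lambda>n. sum_list (map (\<lambda>p. snd p * fst p ^ n) xs))" using assms unfolding Lfin_def by blast
  obtain ys where ys: "\<forall>p\<in>set ys. 0 \<le> fst p \<and> fst p \<le> 1 \<and> 0 \<le> snd p"
     "b = (\<lambda>n. sum_list (map (\<lambda>p. snd p * fst p ^ n) ys))" using assms unfolding Lfin_def by blast
  show ?thesis unfolding Lfin_def
    apply (rule exI[of _ "concat (map (\<lambda>p. map (\<lambda>q. (fst p * fst q, snd p * snd q)) ys) xs)"])
    apply (intro conjI)
    using xs(1) ys(1) apply (auto intro!: mult_le_one)[1]
    using xs(2) ys(2) by (simp add: sum_list_prod_aux)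
qed

lemma Lfin_shift: assumes "Lfin a" shows "Lfin (\<lambda>n. a (Suc n))"
proof -
  obtain xs where xs: "\<forall>p\<in>set xs. 0 \<le> fst p \<and> fst p \<le> 1 \<and> 0 \<le> snd p"
     "a = (\<lambda>n. sum_list (map (\<lambda>p. snd p * fst p ^ n) xs))" using assms unfolding Lfin_def by blast
  show ?thesis unfolding Lfin_def
    apply (rule exI[of _ "map (\<lambda>p. (fst p, snd p * fst p)) xs"])
    using xs by (auto simp: o_def mult_ac)
qed

lemma Lfin_bounds: assumes "Lfin a" shows "0 \<le> a n" "a n \<le> a 0"
proof -
  obtain xs where xs: "\<forall>p\<in>set xs. 0 \<le> fst p \<and> fst p \<le> 1 \<and> 0 \<le> snd p"
     "a = (\<lambda>n. sum_list (map (\<lambda>p. snd p * fst p ^ n) xs))" using assms unfolding Lfin_def by blast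
  show "0 \<le> a n" using xs by (auto intro!: sum_list_nonneg mult_nonneg_nonneg zero_le_power)
  show "a n \<le> a 0" using xs
    by (auto intro!: sum_list_mono mult_left_le power_le_one)
qed



definition Lm :: "(nat \<Rightarrow> real) \<Rightarrow> bool" where
  "Lm c \<longleftrightarrow> (\<exists>f. (\<forall>k. Lfin (f k)) \<and> (\<forall>n. (\<lambda>k. f k n) \<longlonglongrightarrow> c n))"

lemma Lm_Lfin: "Lfin c \<Longrightarrow> Lm c"
  unfolding Lm_def by (rule exI[of _ "\<lambda>k. c"]) auto

lemma Lm_add: assumes "Lm a" "Lm b" shows "Lm (\<lambda>n. a n + b n)"
proof -
  obtain f where f: "\<forall>k. Lfin (f k)" "\<forall>n. (\<lambda>k. f k n) \<longlonglongrightarrow> a n" using assms unfolding Lm_def by blast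
  obtain g where g: "\<forall>k. Lfin (g k)" "\<forall>n. (\<lambda>k. g k n) \<longlonglongrightarrow> b n" using assms unfolding Lm_def by blast
  show ?thesis unfolding Lm_def
    by (rule exI[of _ "\<lambda>k n. f k n + g k n"]) (use f g in \<open>auto intro!: Lfin_add tendsto_add\<close>)
qed

lemma Lm_mult: assumes "Lm a" "Lm b" shows "Lm (\<lambda>n. a n * b n)"
proof -
  obtain f where f: "\<forall>k. Lfin (f k)" "\<forall>n. (\<lambda>k. f k n) \<longlonglongrightarrow> a n" using assms unfolding Lm_def by blast
  obtain g where g: "\<forall>k. Lfin (g k)" "\<forall>n. (\<lambda>k. g k n) \<longlonglongrightarrow> b n" using assms unfolding Lm_def by blast
  show ?thesis unfolding Lm_def
    by (rule exI[of _ "\<lambda>k n. f k n * g k n"]) (use f g in \<open>auto intro!: Lfin_mult tendsto_mult\<close>)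
qed

lemma Lm_scale: assumes "Lm a" "0 \<le> t" shows "Lm (\<lambda>n. t * a n)"
proof -
  obtain f where f: "\<forall>k. Lfin (f k)" "\<forall>n. (\<lambda>k. f k n) \<longlonglongrightarrow> a n" using assms unfolding Lm_def by blast
  show ?thesis unfolding Lm_def
    by (rule exI[of _ "\<lambda>k n. t * f k n"]) (use f assms in \<open>auto intro!: Lfin_scale tendsto_mult\<close>)
qed

lemma Lm_shift: assumes "Lm a" shows "Lm (\<lambda>n. a (Suc n))"
proof -
  obtain f where f: "\<forall>k. Lfin (f k)" "\<forall>n. (\<lambda>k. f k n) \<longlonglongrightarrow> a n" using assms unfolding Lm_def by blast
  show ?thesis unfolding Lm_def
    by (rule exI[of _ "\<lambda>k n. f k (Suc n)"]) (use f in \<open>auto intro!: Lfin_shift\<close>)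
qed

lemma Lm_shiftn: assumes "Lm a" shows "Lm (\<lambda>n. a (n + i))"
proof (induction i)
  case 0 then show ?case using assms by simp
next
  case (Suc i)
  from Lm_shift[OF Suc] show ?case by simp
qed

lemma Lm_bounds: assumes "Lm a" shows "0 \<le> a n" "a n \<le> a 0"
proof -
  obtain f where f: "\<forall>k. Lfin (f k)" "\<forall>n. (\<lambda>k. f k n) \<longlonglongrightarrow> a n" using assms unfolding Lm_def by blast
  show "0 \<le> a n"
    by (rule LIMSEQ_le_const[OF f(2)[rule_format, of n]]) (use f Lfin_bounds in auto)
  show "a n \<le> a 0"
    by (rule LIMSEQ_le[OF f(2)[rule_format, of n] f(2)[rule_format, of 0]]) (use f Lfin_bounds in auto)
qed

lemma Lm_limit:
  assumes g: "\<And>k. Lm (g k)" and lim: "\<And>n. (\<lambda>k. g k n) \<longlonglongrightarrow> c n"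
  shows "Lm c"
proof -
  have "\<exists>h. Lfin h \<and> (\<forall>n\<le>k. \<bar>h n - g k n\<bar> < 1 / (real k + 1))" for k
  proof -
    obtain f where f: "\<forall>j. Lfin (f j)" "\<forall>n. (\<lambda>j. f j n) \<longlonglongrightarrow> g k n" using g[of k] unfolding Lm_def by blast
    have "\<forall>n\<in>{..k}. eventually (\<lambda>j. dist (f j n) (g k n) < 1 / (real k + 1)) sequentially"
      using f(2) by (auto intro!: tendstoD)
    then have "eventually (\<lambda>j. \<forall>n\<in>{..k}. dist (f j n) (g k n) < 1 / (real k + 1)) sequentially"
      by (intro eventually_ball_finite) auto
    then obtain j where "\<forall>n\<in>{..k}. dist (f j n) (g k n) < 1 / (real k + 1)"
      using eventually_sequentially by auto
    then show ?thesis using f(1) by (intro exI[of _ "f j"]) (auto simp: dist_real_def)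
  qed
  then obtain h where h: "\<And>k. Lfin (h k)" "\<And>k n. n \<le> k \<Longrightarrow> \<bar>h k n - g k n\<bar> < 1 / (real k + 1)"
    by metis
  show ?thesis unfolding Lm_def
  proof (intro exI[of _ h] conjI allI)
    fix n
    have "(\<lambda>k. 1 / (real k + 1)) \<longlonglongrightarrow> 0"
      using LIMSEQ_inverse_real_of_nat by (simp add: inverse_eq_divide add.commute)
    then have "(\<lambda>k. h k n - g k n) \<longlonglongrightarrow> 0"
      by (rule Lim_null_comparison[rotated])
         (use h(2) in \<open>auto intro!: eventually_sequentiallyI[of n] less_imp_le\<close>)
    then have "(\<lambda>k. (h k n - g k n) + g k n) \<longlonglongrightarrow> 0 + c n"
      by (intro tendsto_add lim)
    then show "(\<lambda>k. h k n) \<longlonglongrightarrow> c n" by simp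
  qed (use h in auto)
qed

lemma Lm_const1: "Lm (\<lambda>n. 1)"
  using Lm_Lfin[OF Lfin_pow[of 1]] by simp

lemma Lm_zero: "Lm (\<lambda>n. 0)"
  using Lm_Lfin[OF Lfin_zero] .

lemma Lm_power: assumes "Lm a" shows "Lm (\<lambda>n. a n ^ j)"
proof (induction j)
  case 0 then show ?case using Lm_const1 by simp
next
  case (Suc j) then show ?case using Lm_mult[OF assms Suc] by simp
qed

lemma Lm_sum: fixes N :: nat assumes "\<And>i. Lm (g i)" shows "Lm (\<lambda>n. \<Sum>i<N. g i n)"
proof (induction N)
  case 0 then show ?case using Lm_zero by simp
next
  case (Suc N) then show ?case using Lm_add[OF Suc assms[of N]] by simp
qed

lemma Lm_series: assumes "\<And>i. Lm (g i)" "\<And>n. (\<lambda>i. g i n) sums c n" shows "Lm c"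
  by (rule Lm_limit[of "\<lambda>N n. \<Sum>i<N. g i n"]) (use assms in \<open>auto intro: Lm_sum simp: sums_def\<close>)



lemma sum_atMost_ge0: fixes a :: "nat \<Rightarrow> real"
  assumes "\<And>j. 0 \<le> a j" shows "a 0 \<le> (\<Sum>j\<le>n. a j)"
  using member_le_sum[of 0 "{..n}" a] assms by auto

lemma Lm_core_r:
  fixes b :: "nat \<Rightarrow> real" and r \<alpha> :: real
  assumes b: "Lm b" "b 0 > 0" "\<And>n. b n \<le> r ^ n * b 0" and r: "0 \<le> r" "r < 1" and \<alpha>: "\<alpha> > 0"
  shows "Lm (\<lambda>n. (\<Sum>j\<le>n. b j) powr (-\<alpha>))"
proof -
  have bnn: "0 \<le> b n" for n using Lm_bounds[OF b(1)] by auto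
  have sb: "summable b"
    by (rule summable_comparison_test[of _ "\<lambda>n. b 0 * r ^ n"])
       (use bnn b(3) r in \<open>auto intro!: summable_mult summable_geometric simp: mult.commute\<close>)
  define C where "C = suminf b"
  define d where "d n = (\<Sum>i. b (i + Suc n))" for n
  have Cd: "C = d n + (\<Sum>j\<le>n. b j)" for n
    unfolding C_def d_def using suminf_split_initial_segment[OF sb, of "Suc n"]
    by (simp add: lessThan_Suc_atMost)
  have dnn: "0 \<le> d n" for n
    unfolding d_def using bnn by (intro suminf_nonneg summable_ignore_initial_segment sb) auto
  have Apos: "0 < (\<Sum>j\<le>n. b j)" for n
    using sum_atMost_ge0[of b n] bnn b(2) by auto
  have Cpos: "C > 0" using Cd[of 0] dnn[of 0] Apos[of 0] by linarith
  have Ld: "Lm d"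
  proof (rule Lm_series[of "\<lambda>i n. b (n + Suc i)"])
    show "Lm (\<lambda>n. b (n + Suc i))" for i by (rule Lm_shiftn[OF b(1)])
    show "(\<lambda>i. b (n + Suc i)) sums d n" for n
      unfolding d_def using summable_ignore_initial_segment[OF sb, of "Suc n"]
      by (simp add: add.commute summable_sums)
  qed
  define coef where "coef i = pochhammer \<alpha> i / fact i * C powr (-\<alpha> - real i)" for i
  have coefnn: "0 \<le> coef i" for i
  proof -
    have "0 < pochhammer \<alpha> i" using \<alpha> by (rule pochhammer_pos)
    moreover have "0 < C powr (-\<alpha> - real i)" using Cpos by simp
    ultimately show ?thesis unfolding coef_def by simp
  qed
  show ?thesis
  proof (rule Lm_series[of "\<lambda>i n. coef i * d n ^ i"])
    show "Lm (\<lambda>n. coef i * d n ^ i)" for i by (intro Lm_scale Lm_power Ld coefnn)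
    show "(\<lambda>i. coef i * d n ^ i) sums (\<Sum>j\<le>n. b j) powr - \<alpha>" for n
    proof -
      have "\<bar>- d n\<bar> < C" using Cd[of n] Apos[of n] dnn[of n] by auto
      from gen_binomial_real''[OF this, of "-\<alpha>"]
      have "(\<lambda>i. (- \<alpha> gchoose i) * C powr (- \<alpha> - real i) * (- d n) ^ i) sums (C + - d n) powr - \<alpha>" .
      moreover have "(- \<alpha> gchoose i) * C powr (- \<alpha> - real i) * (- d n) ^ i = coef i * d n ^ i" for i
      proof -
        have "(- \<alpha> gchoose i) * (- d n) ^ i = ((-1)^i * (-1)^i) * pochhammer \<alpha> i / fact i * d n ^ i"
          by (simp add: gbinomial_pochhammer power_minus[of "d n"])
        also have "(-1::real)^i * (-1)^i = 1" by (simp add: power_mult_distrib[symmetric])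
        finally show ?thesis unfolding coef_def by (simp add: field_simps)
      qed
      moreover have "C + - d n = (\<Sum>j\<le>n. b j)" using Cd[of n] by simp
      ultimately show ?thesis by simp
    qed
  qed
qed

lemma Lm_core:
  fixes a :: "nat \<Rightarrow> real" and \<alpha> :: real
  assumes a: "Lm a" "a 0 > 0" and \<alpha>: "\<alpha> > 0"
  shows "Lm (\<lambda>n. (\<Sum>j\<le>n. a j) powr (-\<alpha>))"
proof -
  define r where "r k = 1 - 1 / (real k + 2)" for k
  have r0: "0 \<le> r k" and r1: "r k < 1" for k unfolding r_def by (auto simp: field_simps)
  have ann: "0 \<le> a n" and ale: "a n \<le> a 0" for n using Lm_bounds[OF a(1)] by auto
  show ?thesis
  proof (rule Lm_limit[of "\<lambda>k n. (\<Sum>j\<le>n. r k ^ j * a j) powr (-\<alpha>)"])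
    fix k
    show "Lm (\<lambda>n. (\<Sum>j\<le>n. r k ^ j * a j) powr - \<alpha>)"
    proof (rule Lm_core_r[of "\<lambda>n. r k ^ n * a n", OF _ _ _ r0 r1 \<alpha>])
      show "Lm (\<lambda>n. r k ^ n * a n)" by (intro Lm_mult Lm_Lfin Lfin_pow r0 a(1) less_imp_le r1)
      show "0 < r k ^ 0 * a 0" using a by simp
      show "r k ^ n * a n \<le> r k ^ n * (r k ^ 0 * a 0)" for n using ale r0 by (simp add: mult_left_mono)
    qed
  next
    fix n
    have "(\<lambda>k. 1 / (real k + 2)) \<longlonglongrightarrow> 0"
    proof -
      have "(\<lambda>k. 1 / (real k + 1)) \<longlonglongrightarrow> 0"
        using LIMSEQ_inverse_real_of_nat by (simp add: inverse_eq_divide add.commute)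
      then show ?thesis by (rule Lim_null_comparison[rotated]) (auto simp: divide_simps)
    qed
    then have "r \<longlonglongrightarrow> 1 - 0" unfolding r_def by (intro tendsto_diff tendsto_const)
    then have "(\<lambda>k. \<Sum>j\<le>n. r k ^ j * a j) \<longlonglongrightarrow> (\<Sum>j\<le>n. 1 ^ j * a j)"
      by (intro tendsto_sum tendsto_mult tendsto_power tendsto_const) simp
    moreover have "(\<Sum>j\<le>n. a j) \<noteq> 0" using sum_atMost_ge0[of a n] ann a(2) by auto
    ultimately show "(\<lambda>k. (\<Sum>j\<le>n. r k ^ j * a j) powr - \<alpha>) \<longlonglongrightarrow> (\<Sum>j\<le>n. a j) powr - \<alpha>"
      by (intro tendsto_powr tendsto_const) auto
  qed
qed



fun ss :: "nat \<Rightarrow> real" where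
  "ss 0 = 1"
| "ss (Suc n) = (ss n + sqrt (ss n ^ 2 + 4)) / 2"

lemma ss_ge1: "ss n \<ge> 1"
proof (induction n)
  case 0 then show ?case by simp
next
  case (Suc n)
  have "sqrt (ss n ^ 2 + 4) \<ge> sqrt (ss n ^ 2)" by (intro real_sqrt_le_mono) simp
  then have "sqrt (ss n ^ 2 + 4) \<ge> ss n" using Suc by simp
  then show ?case using Suc by simp
qed

lemma ss_rec: "ss (Suc n) = ss n + 1 / ss (Suc n)"
proof -
  define u where "u = ss n"
  define w where "w = sqrt (u ^ 2 + 4)"
  have w2: "w ^ 2 = u ^ 2 + 4" unfolding w_def by simp
  have t: "ss (Suc n) = (u + w) / 2" unfolding u_def w_def by simp
  have pos: "ss (Suc n) > 0" using ss_ge1[of "Suc n"] by simp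
  have "((u + w) / 2) * ((u + w) / 2 - u) = 1"
    using w2 by (simp add: field_simps power2_eq_square)
  then have "ss (Suc n) * (ss (Suc n) - ss n) = 1" using t u_def by simp
  then show ?thesis using pos by (simp add: field_simps)
qed

definition mm :: "nat \<Rightarrow> real" where "mm n = 1 / ss n"

lemma mm_pos: "mm n > 0" unfolding mm_def using ss_ge1[of n] by simp

lemma sum_mm: "(\<Sum>k\<le>n. mm k) = ss n"
proof (induction n)
  case 0 then show ?case by (simp add: mm_def)
next
  case (Suc n) then show ?case using ss_rec[of n] by (simp add: mm_def)
qed

lemma sum_split0: fixes n :: nat shows "(\<Sum>k\<le>n. f k) = f 0 + (\<Sum>k=1..n. (f k :: real))"
proof -
  have "{..n} = insert 0 {1..n}" by (auto simp: not_less_eq_eq)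
  then show ?thesis by simp
qed

lemma quad_unique:
  fixes P x y :: real
  assumes "0 \<le> P" "0 < x" "0 < y" "(P + x) * x = 1" "(P + y) * y = 1"
  shows "x = y"
proof -
  have "(x - y) * (P + x + y) = 0" using assms(4,5) by (simp add: algebra_simps)
  moreover have "P + x + y > 0" using assms by simp
  ultimately show ?thesis by simp
qed

lemma is_m_seq_mm: "is_m_seq mm"
  unfolding is_m_seq_def
proof (intro conjI allI impI)
  show "mm 0 = 1" by (simp add: mm_def)
  show "0 < mm n" for n by (rule mm_pos)
  fix n :: nat assume "1 \<le> n"
  have "1 + (\<Sum>k = 1..n. mm k) = (\<Sum>k\<le>n. mm k)" using sum_split0[of mm n] by (simp add: mm_def)
  then show "(1 + (\<Sum>k = 1..n. mm k)) * mm n = 1"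
    using sum_mm[of n] ss_ge1[of n] by (simp add: mm_def)
qed

lemma is_m_seq_unique: assumes "is_m_seq m" shows "m = mm"
proof
  fix n show "m n = mm n"
  proof (induction n rule: less_induct)
    case (less n)
    show ?case
    proof (cases "n = 0")
      case True then show ?thesis using assms by (simp add: is_m_seq_def mm_def)
    next
      case False
      define P where "P = (\<Sum>k<n. mm k)"
      have P: "P = (\<Sum>k<n. m k)" unfolding P_def using less by simp
      have Pnn: "0 \<le> P" unfolding P_def using mm_pos by (simp add: sum_nonneg less_imp_le)
      have "(1 + (\<Sum>k = 1..n. m k)) * m n = 1" using assms False by (simp add: is_m_seq_def)
      moreover have "1 + (\<Sum>k = 1..n. m k) = (\<Sum>k\<le>n. m k)" using sum_split0[of m n] assms
        by (simp add: is_m_seq_def)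
      moreover have "(\<Sum>k\<le>n. m k) = P + m n" unfolding P by (simp add: lessThan_Suc_atMost[symmetric])
      ultimately have e1: "(P + m n) * m n = 1" by simp
      have "(\<Sum>k\<le>n. mm k) = P + mm n" unfolding P_def by (simp add: lessThan_Suc_atMost[symmetric])
      then have e2: "(P + mm n) * mm n = 1" using sum_mm[of n] ss_ge1[of n] by (simp add: mm_def)
      show ?thesis
        by (rule quad_unique[OF Pnn _ mm_pos e1 e2]) (use assms in \<open>simp add: is_m_seq_def\<close>)
    qed
  qed
qed

lemma m_seq_eq: "m_seq = mm"
  unfolding m_seq_def using is_m_seq_mm is_m_seq_unique by (rule the_equality)



lemma contr_conv:
  fixes e \<epsilon> :: "nat \<Rightarrow> real" and q :: real
  assumes enn: "\<And>k. 0 \<le> e k" and rec: "\<And>k. e (Suc k) \<le> q * e k + \<epsilon> k"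
    and q: "0 \<le> q" "q < 1" and eps: "\<epsilon> \<longlonglongrightarrow> 0"
  shows "e \<longlonglongrightarrow> 0"
proof (rule LIMSEQ_I)
  fix r :: real assume r: "0 < r"
  have "(1 - q) * r / 2 > 0" using q r by simp
  from LIMSEQ_D[OF eps this] obtain K where K: "\<And>k. k \<ge> K \<Longrightarrow> norm (\<epsilon> k - 0) < (1 - q) * r / 2"
    by blast
  have bound: "e (K + j) \<le> q ^ j * e K + r / 2" for j
  proof (induction j)
    case 0 then show ?case using r by simp
  next
    case (Suc j)
    have "e (K + Suc j) \<le> q * e (K + j) + \<epsilon> (K + j)" using rec[of "K + j"] by simp
    also have "\<dots> \<le> q * (q ^ j * e K + r / 2) + (1 - q) * r / 2"
      using K[of "K + j"] Suc q by (intro add_mono mult_left_mono) auto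
    also have "\<dots> = q ^ Suc j * e K + r / 2" by (simp add: field_simps)
    finally show ?case .
  qed
  have "(\<lambda>j. q ^ j * e K) \<longlonglongrightarrow> 0 * e K"
    using q by (intro tendsto_mult LIMSEQ_power_zero tendsto_const) auto
  from LIMSEQ_D[OF this, of "r / 2"] r obtain J where J: "\<And>j. j \<ge> J \<Longrightarrow> norm (q ^ j * e K - 0 * e K) < r / 2"
    by auto
  show "\<exists>no. \<forall>n\<ge>no. norm (e n - 0) < r"
  proof (intro exI allI impI)
    fix n assume n: "n \<ge> K + J"
    have "e n = e (K + (n - K))" using n by simp
    also have "\<dots> \<le> q ^ (n - K) * e K + r / 2" by (rule bound)
    also have "\<dots> < r"
    proof -
      have "J \<le> n - K" using n by arith
      then have "norm (q ^ (n - K) * e K - 0 * e K) < r / 2" by (rule J)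
      then show ?thesis by simp
    qed
    finally show "norm (e n - 0) < r" using enn[of n] by simp
  qed
qed

lemma iter_conv:
  fixes S x :: "nat \<Rightarrow> real" and Sl y :: real
  assumes S: "S \<longlonglongrightarrow> Sl" "\<And>k. S k \<ge> 1" and x: "\<And>k. x k \<ge> 0"
    and rec: "\<And>k. x (Suc k) = 1 / (S k + x k)"
    and y: "y > 0" "(Sl + y) * y = 1"
  shows "x \<longlonglongrightarrow> y"
proof -
  have Sl1: "Sl \<ge> 1" by (rule LIMSEQ_le_const[OF S(1)]) (use S(2) in auto)
  have y1: "y < 1"
  proof (rule ccontr)
    assume "\<not> y < 1"
    then have "(Sl + y) * y \<ge> 2 * 1" using Sl1 by (intro mult_mono) auto
    then show False using y by simp
  qed
  have yinv: "y = 1 / (Sl + y)" using y Sl1 by (simp add: field_simps)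
  define e where "e k = \<bar>x k - y\<bar>" for k
  have step: "e (Suc k) \<le> y * e k + y * \<bar>Sl - S k\<bar>" for k
  proof -
    have pos: "S k + x k \<ge> 1" using S(2)[of k] x[of k] by simp
    have "x (Suc k) - y = 1 / (S k + x k) - 1 / (Sl + y)" using rec yinv by metis
    also have "\<dots> = ((Sl - S k) + (y - x k)) / ((S k + x k) * (Sl + y))"
      using pos Sl1 y by (simp add: field_simps)
    also have "\<dots> = ((Sl - S k) + (y - x k)) / (S k + x k) * (1 / (Sl + y))"
      by simp
    also have "\<dots> = y * ((Sl - S k) + (y - x k)) / (S k + x k)"
      unfolding yinv[symmetric] by simp
    finally have "e (Suc k) = y * \<bar>(Sl - S k) + (y - x k)\<bar> / (S k + x k)"
      unfolding e_def using y pos by (simp add: abs_mult abs_divide)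
    also have "\<dots> \<le> y * \<bar>(Sl - S k) + (y - x k)\<bar>"
    proof -
      have nn: "0 \<le> y * \<bar>(Sl - S k) + (y - x k)\<bar>" using y by simp
      have "y * \<bar>(Sl - S k) + (y - x k)\<bar> * 1 \<le> y * \<bar>(Sl - S k) + (y - x k)\<bar> * (S k + x k)"
        by (rule mult_left_mono[OF pos nn])
      then show ?thesis using pos by (simp add: divide_le_eq)
    qed
    also have "\<dots> \<le> y * (\<bar>Sl - S k\<bar> + e k)" unfolding e_def using y
      by (intro mult_left_mono) auto
    finally show ?thesis by (simp add: algebra_simps)
  qed
  have "(\<lambda>k. Sl - S k) \<longlonglongrightarrow> 0" using tendsto_diff[OF tendsto_const[of Sl] S(1)] by simp
  then have "(\<lambda>k. y * \<bar>Sl - S k\<bar>) \<longlonglongrightarrow> 0"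
    by (intro tendsto_mult_right_zero) (simp add: tendsto_rabs_zero_iff)
  then have "e \<longlonglongrightarrow> 0"
    by (intro contr_conv[of e y "\<lambda>k. y * \<bar>Sl - S k\<bar>"] step) (use y y1 e_def in auto)
  then have "(\<lambda>k. x k - y) \<longlonglongrightarrow> 0" unfolding e_def by (simp add: tendsto_rabs_zero_iff)
  then show ?thesis by (simp add: LIM_zero_iff)
qed

primrec bb :: "nat \<Rightarrow> nat \<Rightarrow> real" where
  "bb 0 = (\<lambda>n. 0 ^ n)"
| "bb (Suc k) = (\<lambda>n. 1 / (\<Sum>j\<le>n. bb k j))"

lemma bb_props: "Lm (bb k) \<and> bb k 0 = 1"
proof (induction k)
  case 0 then show ?case by (simp add: Lm_Lfin Lfin_pow)
next
  case (Suc k)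
  then have pos: "(\<Sum>j\<le>n. bb k j) > 0" for n
    using sum_atMost_ge0[of "bb k" n] Lm_bounds[of "bb k"] by force
  have "Lm (\<lambda>n. (\<Sum>j\<le>n. bb k j) powr (-1))" using Suc by (intro Lm_core) auto
  moreover have "(\<Sum>j\<le>n. bb k j) powr (-1) = bb (Suc k) n" for n
    using pos[of n] by (simp add: powr_neg_one)
  ultimately show ?case using Suc by simp
qed

lemma bb_conv: "(\<lambda>k. bb k n) \<longlonglongrightarrow> mm n"
proof (induction n rule: less_induct)
  case (less n)
  show ?case
  proof (cases "n = 0")
    case True then show ?thesis using bb_props by (simp add: mm_def)
  next
    case False
    define S where "S k = (\<Sum>j<n. bb k j)" for k
    have "S \<longlonglongrightarrow> (\<Sum>j<n. mm j)" unfolding S_def by (intro tendsto_sum less) auto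
    moreover have "S k \<ge> 1" for k
    proof -
      have "bb k 0 \<le> S k" unfolding S_def using False Lm_bounds[of "bb k"] bb_props
        by (intro member_le_sum) auto
      then show ?thesis using bb_props by simp
    qed
    moreover have "bb k n \<ge> 0" for k using Lm_bounds[of "bb k"] bb_props by auto
    moreover have "bb (Suc k) n = 1 / (S k + bb k n)" for k
      unfolding S_def by (simp add: lessThan_Suc_atMost[symmetric])
    moreover have "((\<Sum>j<n. mm j) + mm n) * mm n = 1"
      using sum_mm[of n] ss_ge1[of n] by (simp add: lessThan_Suc_atMost[symmetric] mm_def)
    ultimately show ?thesis by (intro iter_conv[of S _ "\<lambda>k. bb k n"] mm_pos) auto
  qed
qed

lemma Lm_m_powr: assumes "\<alpha> > 0" shows "Lm (\<lambda>n. mm n powr \<alpha>)"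
proof (rule Lm_limit[of "\<lambda>k n. (\<Sum>j\<le>n. bb k j) powr (-\<alpha>)"])
  show "Lm (\<lambda>n. (\<Sum>j\<le>n. bb k j) powr - \<alpha>)" for k using bb_props[of k] assms by (intro Lm_core) auto
  fix n
  have "(\<lambda>k. \<Sum>j\<le>n. bb k j) \<longlonglongrightarrow> (\<Sum>j\<le>n. mm j)" by (intro tendsto_sum bb_conv)
  then have "(\<lambda>k. (\<Sum>j\<le>n. bb k j) powr - \<alpha>) \<longlonglongrightarrow> ss n powr - \<alpha>"
    unfolding sum_mm using ss_ge1[of n] by (intro tendsto_powr tendsto_const) auto
  moreover have "ss n powr - \<alpha> = mm n powr \<alpha>" unfolding mm_def using ss_ge1[of n]
    by (simp add: powr_minus_divide powr_divide)
  ultimately show "(\<lambda>k. (\<Sum>j\<le>n. bb k j) powr - \<alpha>) \<longlonglongrightarrow> mm n powr \<alpha>" by simp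
qed



lemma sum_filter_aux:
  fixes ys :: "(real \<times> real) list" and f :: "real \<Rightarrow> real"
  assumes "finite A" "fst ` set ys \<subseteq> A"
  shows "(\<Sum>a\<in>A. f a * sum_list (map snd (filter (\<lambda>z. fst z = a) ys))) = sum_list (map (\<lambda>q. snd q * f (fst q)) ys)"
  using assms(2)
proof (induction ys)
  case Nil then show ?case by simp
next
  case (Cons q ys)
  have "(\<Sum>a\<in>A. f a * sum_list (map snd (filter (\<lambda>z. fst z = a) (q # ys))))
      = (\<Sum>a\<in>A. (if fst q = a then f a * snd q else 0)) + (\<Sum>a\<in>A. f a * sum_list (map snd (filter (\<lambda>z. fst z = a) ys)))"
    unfolding sum.distrib[symmetric] by (intro sum.cong refl) (simp add: distrib_left)
  also have "(\<Sum>a\<in>A. (if fst q = a then f a * snd q else 0)) = f (fst q) * snd q"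
    using Cons.prems assms(1) by (simp add: sum.delta)
  finally show ?case using Cons by simp
qed

lemma sum_list_div: "sum_list (map (\<lambda>q. g q / (W::real)) xs) = sum_list (map g xs) / W"
  by (induction xs) (auto simp: add_divide_distrib)

lemma integral_pmf_of_list:
  fixes ys :: "(real \<times> real) list" and f :: "real \<Rightarrow> real"
  assumes wf: "pmf_of_list_wf ys"
  shows "(\<integral>x. f x \<partial>measure_pmf (pmf_of_list ys)) = sum_list (map (\<lambda>q. snd q * f (fst q)) ys)"
proof -
  have "(\<integral>x. f x \<partial>measure_pmf (pmf_of_list ys)) = (\<Sum>a\<in>set (map fst ys). f a * pmf (pmf_of_list ys) a)"
    by (rule integral_measure_pmf_real) (use set_pmf_of_list[OF wf] in auto)
  also have "\<dots> = (\<Sum>a\<in>set (map fst ys). f a * sum_list (map snd (filter (\<lambda>z. fst z = a) ys)))"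
    by (simp add: pmf_pmf_of_list[OF wf])
  also have "\<dots> = sum_list (map (\<lambda>q. snd q * f (fst q)) ys)"
    by (rule sum_filter_aux) auto
  finally show ?thesis .
qed

lemma real_distribution_pmf: "real_distribution (distr (measure_pmf p) borel (\<lambda>x::real. x))"
proof -
  have "prob_space (distr (measure_pmf p) borel (\<lambda>x::real. x))"
    by (rule prob_space.prob_space_distr) (auto simp: measure_pmf.prob_space_axioms)
  then show ?thesis unfolding real_distribution_def real_distribution_axioms_def by auto
qed

lemma list_distribution:
  fixes xs :: "(real \<times> real) list"
  assumes xs: "\<forall>p\<in>set xs. 0 \<le> fst p \<and> fst p \<le> 1 \<and> 0 \<le> snd p"
  shows "\<exists>\<mu>. real_distribution \<mu> \<and> measure \<mu> {-1<..1} = 1 \<and>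
     (\<forall>f::real\<Rightarrow>real. f \<in> borel_measurable borel \<longrightarrow>
        sum_list (map (\<lambda>q. snd q * f (fst q)) xs) = sum_list (map snd xs) * (\<integral>x. f x \<partial>\<mu>))"
proof (cases "sum_list (map snd xs) = 0")
  case True
  have z: "\<forall>q\<in>set xs. snd q = 0"
    using True sum_list_nonneg_eq_zero_iff[of "map snd xs"] xs by auto
  define \<mu> where "\<mu> = distr (measure_pmf (return_pmf (0::real))) borel (\<lambda>x::real. x)"
  have "measure \<mu> {-1<..1} = 1" unfolding \<mu>_def by (subst measure_distr) auto
  moreover have "sum_list (map (\<lambda>q. snd q * f (fst q)) xs) = 0" for f :: "real \<Rightarrow> real"
    using z by (induction xs) auto
  ultimately show ?thesis using True real_distribution_pmf[of "return_pmf 0"]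
    unfolding \<mu>_def by (intro exI[of _ \<mu>] conjI allI impI) (simp_all add: \<mu>_def)
next
  case False
  define W where "W = sum_list (map snd xs)"
  have "0 \<le> W" unfolding W_def using xs by (auto intro!: sum_list_nonneg)
  then have Wpos: "W > 0" using False unfolding W_def by simp
  define ys where "ys = map (\<lambda>q. (fst q, snd q / W)) xs"
  have wf: "pmf_of_list_wf ys"
  proof (rule pmf_of_list_wfI)
    show "x \<in> set (map snd ys) \<Longrightarrow> 0 \<le> x" for x using xs Wpos unfolding ys_def by auto
    have "sum_list (map snd ys) = sum_list (map (\<lambda>q. snd q / W) xs)" unfolding ys_def by (simp add: o_def)
    also have "\<dots> = W / W" unfolding W_def by (simp add: sum_list_div) 
    finally show "sum_list (map snd ys) = 1" using Wpos by simp
  qed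
  define \<mu> where "\<mu> = distr (measure_pmf (pmf_of_list ys)) borel (\<lambda>x::real. x)"
  have "measure \<mu> {-1<..1} = measure_pmf.prob (pmf_of_list ys) {-1<..1}"
    unfolding \<mu>_def by (subst measure_distr) auto
  also have "\<dots> = sum_list (map snd (filter (\<lambda>x. fst x \<in> {-1<..1}) ys))"
    by (rule measure_pmf_of_list[OF wf])
  also have "filter (\<lambda>x. fst x \<in> {-1<..1}) ys = ys"
    using xs unfolding ys_def by (force intro!: filter_True)
  also have "sum_list (map snd ys) = 1" using wf unfolding pmf_of_list_wf_def by simp
  finally have m1: "measure \<mu> {-1<..1} = 1" .
  have "sum_list (map (\<lambda>q. snd q * f (fst q)) xs) = W * (\<integral>x. f x \<partial>\<mu>)"
    if f: "f \<in> borel_measurable borel" for f :: "real \<Rightarrow> real"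
  proof -
    have "(\<integral>x. f x \<partial>\<mu>) = (\<integral>x. f x \<partial>measure_pmf (pmf_of_list ys))"
      unfolding \<mu>_def using f by (subst integral_distr) auto
    also have "\<dots> = sum_list (map (\<lambda>q. snd q * f (fst q)) ys)" by (rule integral_pmf_of_list[OF wf])
    also have "\<dots> = sum_list (map (\<lambda>q. snd q * f (fst q)) xs) / W"
      unfolding ys_def by (simp add: o_def sum_list_div)
    finally show ?thesis using Wpos by simp
  qed
  then show ?thesis using m1 real_distribution_pmf[of "pmf_of_list ys"]
    by (intro exI[of _ \<mu>] conjI allI impI) (simp_all add: \<mu>_def W_def)
qed



definition cl :: "real \<Rightarrow> real" where "cl x = max 0 (min 1 x)"

lemma cl_meas[measurable]: "(\<lambda>x. cl x ^ n) \<in> borel_measurable borel"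
  unfolding cl_def by measurable

lemma cl_meas2: "cl \<in> borel_measurable borel"
  unfolding cl_def by measurable

lemma cl_cont: "isCont (\<lambda>x. cl x ^ n) x"
  unfolding cl_def by (intro continuous_intros)

lemma cl_bound: "norm (cl x ^ n) \<le> 1"
  unfolding cl_def by (auto simp: abs_mult power_abs intro!: power_le_one)

lemma cl_id: "0 \<le> x \<Longrightarrow> x \<le> 1 \<Longrightarrow> cl x = x"
  unfolding cl_def by auto

lemma measure_to_hausdorff:
  assumes M: "real_distribution M" and s: "0 \<le> s" and c: "\<And>n. c n = s * (\<integral>x. cl x ^ n \<partial>M)"
  shows "hausdorff_moment_seq c"
proof -
  interpret real_distribution M by (rule M)
  define N where "N = distr M (restrict_space borel {0..1::real}) cl"
  define \<tau> where "\<tau> = density N (\<lambda>_. ennreal s)"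
  have clm: "cl \<in> measurable M (restrict_space borel {0..1})"
    by (rule measurable_restrict_space2) (auto simp: cl_def measurable_cong_sets[OF events_eq_borel refl] cl_meas2)
  have sets\<tau>: "sets \<tau> = sets (restrict_space borel {0..1::real})"
    unfolding \<tau>_def N_def by simp
  have space\<tau>: "space \<tau> = {0..1}" unfolding \<tau>_def N_def by (simp add: space_restrict_space)
  have e1: "emeasure \<tau> (space \<tau>) = ennreal s * emeasure N (space N)"
    unfolding \<tau>_def by (simp only: space_density emeasure_density_const[OF sets.top])
  have "emeasure N (space N) = emeasure M (cl -` space N \<inter> space M)"
  proof -
    have "{0..1} \<in> sets (restrict_space borel {0..1::real})"
      using sets.top[of "restrict_space borel {0..1::real}"] by (simp add: space_restrict_space)
    then show ?thesis unfolding N_def by (subst emeasure_distr[OF clm]) auto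
  qed
  also have "\<dots> \<le> 1" by (rule emeasure_le_1)
  finally have e2: "emeasure N (space N) \<le> 1" .
  have "emeasure \<tau> (space \<tau>) \<le> ennreal s * 1" unfolding e1 by (rule mult_left_mono[OF e2]) simp
  then have fin: "emeasure \<tau> (space \<tau>) \<noteq> \<infinity>"
    by (metis ennreal_neq_top infinity_ennreal_def neq_top_trans mult_1_right)
  then interpret \<tau>: finite_measure \<tau> by (rule finite_measureI)
  have pm: "(\<lambda>t. t ^ n) \<in> borel_measurable \<tau>" for n
    by (simp add: measurable_cong_sets[OF sets\<tau> refl] measurable_restrict_space1)
  have int: "integrable \<tau> (\<lambda>t::real. t ^ n)" for n
  proof (rule \<tau>.integrable_const_bound[where B=1])
    show "AE x in \<tau>. norm (x ^ n) \<le> 1" by (rule AE_I2) (auto simp: space\<tau> abs_mult power_abs intro!: power_le_one)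
  qed (rule pm)
  have "(\<integral>t. t ^ n \<partial>\<tau>) = s * (\<integral>x. cl x ^ n \<partial>M)" for n
  proof -
    have "(\<integral>t. t ^ n \<partial>\<tau>) = (\<integral>t. s *\<^sub>R t ^ n \<partial>N)"
      unfolding \<tau>_def by (rule integral_density) (auto simp: N_def measurable_restrict_space1 s)
    also have "\<dots> = s * (\<integral>t. t ^ n \<partial>N)" by simp
    also have "(\<integral>t. t ^ n \<partial>N) = (\<integral>x. cl x ^ n \<partial>M)"
      unfolding N_def by (rule integral_distr[OF clm]) (simp add: measurable_restrict_space1)
    finally show ?thesis .
  qed
  then show ?thesis unfolding hausdorff_moment_seq_def
    using sets\<tau> \<tau>.finite_measure_axioms int c by (intro exI[of _ \<tau>]) auto
qed



lemma Lfin_distribution: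
  assumes "Lfin a"
  shows "\<exists>\<mu>. real_distribution \<mu> \<and> measure \<mu> {-1<..1} = 1 \<and> (\<forall>n. a n = a 0 * (\<integral>x. cl x ^ n \<partial>\<mu>))"
proof -
  obtain xs where xs: "\<forall>p\<in>set xs. 0 \<le> fst p \<and> fst p \<le> 1 \<and> 0 \<le> snd p"
     "a = (\<lambda>n. sum_list (map (\<lambda>p. snd p * fst p ^ n) xs))" using assms unfolding Lfin_def by blast
  obtain \<mu> where \<mu>: "real_distribution \<mu>" "measure \<mu> {-1<..1} = 1"
    "\<And>f::real\<Rightarrow>real. f \<in> borel_measurable borel \<Longrightarrow>
        sum_list (map (\<lambda>q. snd q * f (fst q)) xs) = sum_list (map snd xs) * (\<integral>x. f x \<partial>\<mu>)"
    using list_distribution[OF xs(1)] by blast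
  have a0: "a 0 = sum_list (map snd xs)" unfolding xs(2) by simp
  have "a n = a 0 * (\<integral>x. cl x ^ n \<partial>\<mu>)" for n
  proof -
    have "a n = sum_list (map (\<lambda>q. snd q * cl (fst q) ^ n) xs)"
      unfolding xs(2) using xs(1) by (auto intro!: arg_cong[where f=sum_list] map_cong simp: cl_id)
    also have "\<dots> = a 0 * (\<integral>x. cl x ^ n \<partial>\<mu>)" unfolding a0 by (rule \<mu>(3)) (rule cl_meas)
    finally show ?thesis .
  qed
  then show ?thesis using \<mu> by blast
qed

lemma Lm_hausdorff:
  assumes "Lm c" shows "hausdorff_moment_seq c"
proof -
  obtain f where f: "\<And>k. Lfin (f k)" "\<And>n. (\<lambda>k. f k n) \<longlonglongrightarrow> c n" using assms unfolding Lm_def by blast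
  have "\<forall>k. \<exists>\<mu>. real_distribution \<mu> \<and> measure \<mu> {-1<..1} = 1 \<and> (\<forall>n. f k n = f k 0 * (\<integral>x. cl x ^ n \<partial>\<mu>))"
    using Lfin_distribution[OF f(1)] by blast
  then obtain \<mu> where \<mu>: "\<And>k. real_distribution (\<mu> k)" "\<And>k. measure (\<mu> k) {-1<..1} = 1"
    "\<And>k n. f k n = f k 0 * (\<integral>x. cl x ^ n \<partial>\<mu> k)"
    by metis
  have "tight \<mu>" unfolding tight_def
  proof (intro conjI allI impI)
    show "real_distribution (\<mu> n)" for n by (rule \<mu>(1))
    fix \<epsilon> :: real assume "0 < \<epsilon>"
    then show "\<exists>a b. a < b \<and> (\<forall>n. 1 - \<epsilon> < measure (\<mu> n) {a<..b})"
      using \<mu>(2) by (intro exI[of _ "-1"] exI[of _ 1]) auto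
  qed
  from tight_imp_convergent_subsubsequence[OF this, of id]
  obtain r M where rM: "strict_mono r" "real_distribution M" "weak_conv_m (\<mu> \<circ> id \<circ> r) M"
    by (auto simp: strict_mono_def)
  have "c n = c 0 * (\<integral>x. cl x ^ n \<partial>M)" for n
  proof -
    have i: "(\<lambda>j. \<integral>x. cl x ^ n \<partial>(\<mu> \<circ> id \<circ> r) j) \<longlonglongrightarrow> (\<integral>x. cl x ^ n \<partial>M)"
      by (rule weak_conv_imp_integral_bdd_continuous_conv[of "\<mu> \<circ> id \<circ> r" M "\<lambda>x. cl x ^ n" 1])
         (use \<mu>(1) rM cl_bound[of _ n] in \<open>auto intro: cl_cont\<close>)
    have "(\<lambda>j. f (r j) 0 * (\<integral>x. cl x ^ n \<partial>\<mu> (r j))) \<longlonglongrightarrow> c 0 * (\<integral>x. cl x ^ n \<partial>M)"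
      using LIMSEQ_subseq_LIMSEQ[OF f(2)[of 0] rM(1)] i by (intro tendsto_mult) (auto simp: o_def)
    moreover have "(\<lambda>j. f (r j) 0 * (\<integral>x. cl x ^ n \<partial>\<mu> (r j))) \<longlonglongrightarrow> c n"
      using LIMSEQ_subseq_LIMSEQ[OF f(2)[of n] rM(1)] by (simp add: o_def \<mu>(3)[symmetric])
    ultimately show ?thesis using LIMSEQ_unique by blast
  qed
  then show ?thesis
    by (rule measure_to_hausdorff[OF rM(2) Lm_bounds(1)[OF assms, of 0]])
qed

theorem corollary4p3:
  fixes \<alpha> :: real
  assumes "\<alpha> > 0"
  shows "hausdorff_moment_seq (\<lambda>n. m_seq n powr \<alpha>)"
  unfolding m_seq_eq by (rule Lm_hausdorff[OF Lm_m_powr[OF assms]])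

end
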